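(* Let $A$ be a skew brace. Then: (i) $H(A)=\emptyset$ and $H(0)=\mathrm{Spec}\,A$, where $0=\{e\}$; (ii) $H(I)\cup H(J)=H(I\cap J)=H(I*J)$ for all ideals $I,J$ of $A$; (iii) $\bigcap_{\lambda\in\Lambda}H(I_\lambda)=H\big(\sum_{\lambda\in\Lambda}I_\lambda\big)$ for every family $\{I_\lambda\}_{\lambda\in\Lambda}$ of ideals of $A$.
   Context: A (left) skew brace is a triple $(A,+,\circ)$ where $(A,+)$ and $(A,\circ)$ are groups such that $a\circ(b+c)=a\circ b-a+a\circ c$ for all $a,b,c$; common identity $e$. Put $\lambda_a(b)=-a+a\circ b$ and $a*b=-a+a\circ b-b$. An ideal is a normal subgroup $I$ of both $(A,+)$ and $(A,\circ)$ with $\lambda_a(I)\subseteq I$ for all $a$. For ideals $I,J$, $I*J$ is the ideal generated by $\{i*j\mid i\in I,j\in J\}$; $\sum_\lambda I_\lambda$ is the additive subgroup generated by $\bigcup_\lambda I_\lambda$ (finite sums). A prime ideal is a proper ideal $P$ such that for any subsets $X,Y$ of $A$, $\{x*y\mid x\in X,y\in Y\}\subseteq P$ implies $X\subseteq P$ or $Y\subseteq P$; $\mathrm{Spec}\,A$ is the set of prime ideals, and for an ideal $I$, $H(I)=\{P\in\mathrm{Spec}\,A\mid I\subseteq P\}$. *)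

theory Defs
  imports "HOL-Algebra.Algebra"
begin

definition add_grp :: "'a set \<Rightarrow> ('a \<Rightarrow> 'a \<Rightarrow> 'a) \<Rightarrow> 'a \<Rightarrow> 'a monoid" where
  "add_grp A pl e = \<lparr>carrier = A, monoid.mult = pl, monoid.one = e\<rparr>"

definition circ_grp :: "'a set \<Rightarrow> ('a \<Rightarrow> 'a \<Rightarrow> 'a) \<Rightarrow> 'a \<Rightarrow> 'a monoid" where
  "circ_grp A circ e = \<lparr>carrier = A, monoid.mult = circ, monoid.one = e\<rparr>"

definition aneg :: "'a set \<Rightarrow> ('a \<Rightarrow> 'a \<Rightarrow> 'a) \<Rightarrow> 'a \<Rightarrow> 'a \<Rightarrow> 'a" where
  "aneg A pl e x = inv\<^bsub>add_grp A pl e\<^esub> x"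

definition skew_brace :: "'a set \<Rightarrow> ('a \<Rightarrow> 'a \<Rightarrow> 'a) \<Rightarrow> ('a \<Rightarrow> 'a \<Rightarrow> 'a) \<Rightarrow> 'a \<Rightarrow> bool" where
  "skew_brace A pl circ e \<longleftrightarrow>
     group (add_grp A pl e) \<and> group (circ_grp A circ e) \<and>
     (\<forall>a\<in>A. \<forall>b\<in>A. \<forall>c\<in>A.
        circ a (pl b c) = pl (pl (circ a b) (aneg A pl e a)) (circ a c))"

definition blambda :: "'a set \<Rightarrow> ('a \<Rightarrow> 'a \<Rightarrow> 'a) \<Rightarrow> ('a \<Rightarrow> 'a \<Rightarrow> 'a) \<Rightarrow> 'a \<Rightarrow> 'a \<Rightarrow> 'a \<Rightarrow> 'a" where
  "blambda A pl circ e a b = pl (aneg A pl e a) (circ a b)"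

definition bstar :: "'a set \<Rightarrow> ('a \<Rightarrow> 'a \<Rightarrow> 'a) \<Rightarrow> ('a \<Rightarrow> 'a \<Rightarrow> 'a) \<Rightarrow> 'a \<Rightarrow> 'a \<Rightarrow> 'a \<Rightarrow> 'a" where
  "bstar A pl circ e a b = pl (pl (aneg A pl e a) (circ a b)) (aneg A pl e b)"

definition brace_ideal :: "'a set \<Rightarrow> ('a \<Rightarrow> 'a \<Rightarrow> 'a) \<Rightarrow> ('a \<Rightarrow> 'a \<Rightarrow> 'a) \<Rightarrow> 'a \<Rightarrow> 'a set \<Rightarrow> bool" where
  "brace_ideal A pl circ e I \<longleftrightarrow>
     I \<subseteq> A \<and> normal I (add_grp A pl e) \<and> normal I (circ_grp A circ e) \<and>
     (\<forall>a\<in>A. \<forall>x\<in>I. blambda A pl circ e a x \<in> I)"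

definition ideal_gen :: "'a set \<Rightarrow> ('a \<Rightarrow> 'a \<Rightarrow> 'a) \<Rightarrow> ('a \<Rightarrow> 'a \<Rightarrow> 'a) \<Rightarrow> 'a \<Rightarrow> 'a set \<Rightarrow> 'a set" where
  "ideal_gen A pl circ e S = \<Inter>{I. brace_ideal A pl circ e I \<and> S \<subseteq> I}"

definition ideal_prod :: "'a set \<Rightarrow> ('a \<Rightarrow> 'a \<Rightarrow> 'a) \<Rightarrow> ('a \<Rightarrow> 'a \<Rightarrow> 'a) \<Rightarrow> 'a \<Rightarrow> 'a set \<Rightarrow> 'a set \<Rightarrow> 'a set" where
  "ideal_prod A pl circ e I J =
     ideal_gen A pl circ e {bstar A pl circ e i j | i j. i \<in> I \<and> j \<in> J}"

definition ideal_sum :: "'a set \<Rightarrow> ('a \<Rightarrow> 'a \<Rightarrow> 'a) \<Rightarrow> 'a \<Rightarrow> 'i set \<Rightarrow> ('i \<Rightarrow> 'a set) \<Rightarrow> 'a set" where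
  "ideal_sum A pl e \<Lambda> Is = generate (add_grp A pl e) (\<Union>l\<in>\<Lambda>. Is l)"

definition prime_ideal :: "'a set \<Rightarrow> ('a \<Rightarrow> 'a \<Rightarrow> 'a) \<Rightarrow> ('a \<Rightarrow> 'a \<Rightarrow> 'a) \<Rightarrow> 'a \<Rightarrow> 'a set \<Rightarrow> bool" where
  "prime_ideal A pl circ e P \<longleftrightarrow>
     brace_ideal A pl circ e P \<and> P \<noteq> A \<and>
     (\<forall>U V. U \<subseteq> A \<longrightarrow> V \<subseteq> A \<longrightarrow>
        {bstar A pl circ e x y | x y. x \<in> U \<and> y \<in> V} \<subseteq> P \<longrightarrow> U \<subseteq> P \<or> V \<subseteq> P)"

definition Spec :: "'a set \<Rightarrow> ('a \<Rightarrow> 'a \<Rightarrow> 'a) \<Rightarrow> ('a \<Rightarrow> 'a \<Rightarrow> 'a) \<Rightarrow> 'a \<Rightarrow> 'a set set" where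
  "Spec A pl circ e = {P. prime_ideal A pl circ e P}"

definition Hull :: "'a set \<Rightarrow> ('a \<Rightarrow> 'a \<Rightarrow> 'a) \<Rightarrow> ('a \<Rightarrow> 'a \<Rightarrow> 'a) \<Rightarrow> 'a \<Rightarrow> 'a set \<Rightarrow> 'a set set" where
  "Hull A pl circ e I = {P \<in> Spec A pl circ e. I \<subseteq> P}"

end

theory Submission
  imports Defs
begin

lemma star_mem:
  assumes sb: "skew_brace A pl circ e"
    and I: "brace_ideal A pl circ e I" and J: "brace_ideal A pl circ e J"
    and i: "i \<in> I" and j: "j \<in> J"
  shows "bstar A pl circ e i j \<in> I \<inter> J"
proof -
  let ?G = "add_grp A pl e" and ?M = "circ_grp A circ e"
  interpret G: group ?G using sb by (simp add: skew_brace_def)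
  interpret M: group ?M using sb by (simp add: skew_brace_def)
  have Gm: "\<And>x y. x \<otimes>\<^bsub>?G\<^esub> y = pl x y" and Gc: "carrier ?G = A"
    by (simp_all add: add_grp_def)
  have Mm: "\<And>x y. x \<otimes>\<^bsub>?M\<^esub> y = circ x y" and Mc: "carrier ?M = A"
    by (simp_all add: circ_grp_def)
  have an: "\<And>x. aneg A pl e x = inv\<^bsub>?G\<^esub> x" by (simp add: aneg_def)
  have IA: "I \<subseteq> A" and JA: "J \<subseteq> A" using I J by (simp_all add: brace_ideal_def)
  have iA: "i \<in> A" and jA: "j \<in> A" using i j IA JA by auto
  have InG: "normal I ?G" and InM: "normal I ?M" and Il: "\<forall>a\<in>A. \<forall>x\<in>I. blambda A pl circ e a x \<in> I"
    using I by (simp_all add: brace_ideal_def)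
  have JnG: "normal J ?G" and Jl: "\<forall>a\<in>A. \<forall>x\<in>J. blambda A pl circ e a x \<in> J"
    using J by (simp_all add: brace_ideal_def)
  have IsG: "subgroup I ?G" using InG normal_imp_subgroup by blast
  have JsG: "subgroup J ?G" using JnG normal_imp_subgroup by blast
  have "bstar A pl circ e i j = pl (blambda A pl circ e i j) (aneg A pl e j)"
    by (simp add: bstar_def blambda_def)
  moreover have "blambda A pl circ e i j \<in> J" using Jl iA j by blast
  moreover have "aneg A pl e j \<in> J" using an subgroup.m_inv_closed[OF JsG j] by simp
  ultimately have inJ: "bstar A pl circ e i j \<in> J"
    using subgroup.m_closed[OF JsG] Gm by metis
  define k where "k = inv\<^bsub>?M\<^esub> j \<otimes>\<^bsub>?M\<^esub> i \<otimes>\<^bsub>?M\<^esub> j"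
  have kI: "k \<in> I" unfolding k_def using normal.inv_op_closed1[OF InM] jA i Mc by blast
  have kA: "k \<in> A" using kI IA by auto
  have "j \<otimes>\<^bsub>?M\<^esub> k = i \<otimes>\<^bsub>?M\<^esub> j"
  proof -
    have "i \<in> carrier ?M" "j \<in> carrier ?M" using iA jA Mc by auto
    then show ?thesis by (simp add: k_def M.m_assoc[symmetric])
  qed
  hence cjk: "circ j k = circ i j" by (simp add: Mm)
  define b where "b = blambda A pl circ e j k"
  have bI: "b \<in> I" unfolding b_def using Il jA kI by blast
  have cA: "circ j k \<in> A" using M.m_closed[of j k] jA kA Mc Mm by simp
  have "j \<otimes>\<^bsub>?G\<^esub> (inv\<^bsub>?G\<^esub> j \<otimes>\<^bsub>?G\<^esub> circ j k) = circ j k"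
  proof -
    have "circ j k \<in> carrier ?G" "j \<in> carrier ?G" using cA jA Gc by auto
    then show ?thesis by (simp add: G.m_assoc[symmetric])
  qed
  hence pjb: "pl j b = circ i j" unfolding b_def by (simp add: Gm blambda_def an cjk)
  have bA: "b \<in> A" using bI IA by auto
  have ciA: "circ i j \<in> A" using cjk cA by simp
  have "bstar A pl circ e i j = inv\<^bsub>?G\<^esub> i \<otimes>\<^bsub>?G\<^esub> ((j \<otimes>\<^bsub>?G\<^esub> b) \<otimes>\<^bsub>?G\<^esub> inv\<^bsub>?G\<^esub> j)"
  proof -
    have "i \<in> carrier ?G" "j \<in> carrier ?G" "circ i j \<in> carrier ?G" using iA jA ciA Gc by auto
    then show ?thesis using pjb by (simp add: bstar_def an Gm[symmetric] G.m_assoc)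
  qed
  moreover have "(j \<otimes>\<^bsub>?G\<^esub> b) \<otimes>\<^bsub>?G\<^esub> inv\<^bsub>?G\<^esub> j \<in> I"
    using normal.inv_op_closed2[OF InG] jA bI Gc by blast
  moreover have "inv\<^bsub>?G\<^esub> i \<in> I" using subgroup.m_inv_closed[OF IsG i] .
  ultimately have inI: "bstar A pl circ e i j \<in> I"
    using subgroup.m_closed[OF IsG] by metis
  show ?thesis using inI inJ by blast
qed

theorem proposition4p2:
  fixes A :: "'a set" and pl circ :: "'a \<Rightarrow> 'a \<Rightarrow> 'a" and e :: 'a
  assumes "skew_brace A pl circ e"
  shows "Hull A pl circ e A = {} \<and> Hull A pl circ e {e} = Spec A pl circ e
    \<and> (\<forall>I J. brace_ideal A pl circ e I \<longrightarrow> brace_ideal A pl circ e J \<longrightarrow>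
         Hull A pl circ e I \<union> Hull A pl circ e J = Hull A pl circ e (I \<inter> J) \<and>
         Hull A pl circ e (I \<inter> J) = Hull A pl circ e (ideal_prod A pl circ e I J))
    \<and> (\<forall>(\<Lambda>::'i set) (Is::'i \<Rightarrow> 'a set). (\<forall>l\<in>\<Lambda>. brace_ideal A pl circ e (Is l)) \<longrightarrow>
         Spec A pl circ e \<inter> (\<Inter>l\<in>\<Lambda>. Hull A pl circ e (Is l))
           = Hull A pl circ e (ideal_sum A pl e \<Lambda> Is))"
proof -
  let ?G = "add_grp A pl e"
  interpret G: group ?G using assms by (simp add: skew_brace_def)
  have Gc: "carrier ?G = A" and Go: "\<one>\<^bsub>?G\<^esub> = e" by (simp_all add: add_grp_def)
  have pI: "brace_ideal A pl circ e P" "P \<subseteq> A" "P \<noteq> A" "subgroup P ?G" "e \<in> P"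
    if "P \<in> Spec A pl circ e" for P
  proof -
    show 1: "brace_ideal A pl circ e P" "P \<noteq> A" using that by (auto simp: Spec_def prime_ideal_def)
    show "P \<subseteq> A" using 1 by (simp add: brace_ideal_def)
    show 2: "subgroup P ?G" using 1 normal_imp_subgroup by (auto simp: brace_ideal_def)
    show "e \<in> P" using subgroup.one_closed[OF 2] Go by simp
  qed
  have pr: "U \<subseteq> P \<or> V \<subseteq> P" if "P \<in> Spec A pl circ e" "U \<subseteq> A" "V \<subseteq> A"
     "{bstar A pl circ e x y | x y. x \<in> U \<and> y \<in> V} \<subseteq> P" for P U V
    using that by (auto simp: Spec_def prime_ideal_def)
  have i1: "Hull A pl circ e A = {}"
  proof -
    have False if "P \<in> Spec A pl circ e" "A \<subseteq> P" for P
      using pI(2)[OF that(1)] pI(3)[OF that(1)] that(2) by (metis subset_antisym)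
    then show ?thesis unfolding Hull_def by auto
  qed
  have i2: "Hull A pl circ e {e} = Spec A pl circ e" using pI by (auto simp: Hull_def)
  have ii: "Hull A pl circ e I \<union> Hull A pl circ e J = Hull A pl circ e (I \<inter> J) \<and>
         Hull A pl circ e (I \<inter> J) = Hull A pl circ e (ideal_prod A pl circ e I J)"
    if I: "brace_ideal A pl circ e I" and J: "brace_ideal A pl circ e J" for I J
  proof -
    have IA: "I \<subseteq> A" and JA: "J \<subseteq> A" using I J by (simp_all add: brace_ideal_def)
    let ?S = "{bstar A pl circ e x y | x y. x \<in> I \<and> y \<in> J}"
    have SIJ: "?S \<subseteq> I \<inter> J" using star_mem[OF assms I J] by blast
    have Sg: "?S \<subseteq> ideal_prod A pl circ e I J" by (auto simp: ideal_prod_def ideal_gen_def)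
    have gI: "ideal_prod A pl circ e I J \<subseteq> I \<inter> J"
      using I J SIJ by (auto simp: ideal_prod_def ideal_gen_def)
    have key: "I \<subseteq> P \<or> J \<subseteq> P" if "P \<in> Spec A pl circ e" "?S \<subseteq> P" for P
      using pr[OF that(1) IA JA that(2)] .
    have 1: "Hull A pl circ e I \<union> Hull A pl circ e J = Hull A pl circ e (I \<inter> J)"
    proof
      show "Hull A pl circ e I \<union> Hull A pl circ e J \<subseteq> Hull A pl circ e (I \<inter> J)"
        by (auto simp: Hull_def)
      show "Hull A pl circ e (I \<inter> J) \<subseteq> Hull A pl circ e I \<union> Hull A pl circ e J"
      proof
        fix P assume "P \<in> Hull A pl circ e (I \<inter> J)"
        then have P: "P \<in> Spec A pl circ e" "I \<inter> J \<subseteq> P" by (auto simp: Hull_def)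
        then have "?S \<subseteq> P" using SIJ by (rule_tac subset_trans) auto
        then have "I \<subseteq> P \<or> J \<subseteq> P" using key P(1) by simp
        then show "P \<in> Hull A pl circ e I \<union> Hull A pl circ e J" using P(1) by (auto simp: Hull_def)
      qed
    qed
    have 2: "Hull A pl circ e (I \<inter> J) = Hull A pl circ e (ideal_prod A pl circ e I J)"
    proof
      show "Hull A pl circ e (I \<inter> J) \<subseteq> Hull A pl circ e (ideal_prod A pl circ e I J)"
        using gI by (auto simp: Hull_def)
      show "Hull A pl circ e (ideal_prod A pl circ e I J) \<subseteq> Hull A pl circ e (I \<inter> J)"
      proof
        fix P assume "P \<in> Hull A pl circ e (ideal_prod A pl circ e I J)"
        then have P: "P \<in> Spec A pl circ e" "ideal_prod A pl circ e I J \<subseteq> P" by (auto simp: Hull_def)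
        then have "?S \<subseteq> P" using Sg by (rule_tac subset_trans) auto
        then have "I \<subseteq> P \<or> J \<subseteq> P" using key P(1) by simp
        then show "P \<in> Hull A pl circ e (I \<inter> J)" using P(1) by (auto simp: Hull_def)
      qed
    qed
    show ?thesis using 1 2 by simp
  qed
  have iii: "Spec A pl circ e \<inter> (\<Inter>l\<in>\<Lambda>. Hull A pl circ e (Is l))
           = Hull A pl circ e (ideal_sum A pl e \<Lambda> Is)"
    if "\<forall>l\<in>\<Lambda>. brace_ideal A pl circ e (Is l)" for \<Lambda> :: "'i set" and Is
  proof -
    have inc: "(\<Union>l\<in>\<Lambda>. Is l) \<subseteq> ideal_sum A pl e \<Lambda> Is"
      unfolding ideal_sum_def by (intro UN_least subsetI generate.incl)
    have sub: "ideal_sum A pl e \<Lambda> Is \<subseteq> P" if "P \<in> Spec A pl circ e" "\<forall>l\<in>\<Lambda>. Is l \<subseteq> P" for P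
    proof -
      have "(\<Union>l\<in>\<Lambda>. Is l) \<subseteq> P" using that(2) by blast 
      then show ?thesis unfolding ideal_sum_def by (rule G.generate_subgroup_incl[OF _ pI(4)[OF that(1)]])
    qed
    show ?thesis
    proof
      show "Spec A pl circ e \<inter> (\<Inter>l\<in>\<Lambda>. Hull A pl circ e (Is l)) \<subseteq> Hull A pl circ e (ideal_sum A pl e \<Lambda> Is)"
      proof
        fix P assume "P \<in> Spec A pl circ e \<inter> (\<Inter>l\<in>\<Lambda>. Hull A pl circ e (Is l))"
        then have "P \<in> Spec A pl circ e" "\<forall>l\<in>\<Lambda>. Is l \<subseteq> P" by (auto simp: Hull_def)
        then show "P \<in> Hull A pl circ e (ideal_sum A pl e \<Lambda> Is)" using sub by (simp add: Hull_def)
      qed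
      show "Hull A pl circ e (ideal_sum A pl e \<Lambda> Is) \<subseteq> Spec A pl circ e \<inter> (\<Inter>l\<in>\<Lambda>. Hull A pl circ e (Is l))"
      proof
        fix P assume "P \<in> Hull A pl circ e (ideal_sum A pl e \<Lambda> Is)"
        then have "P \<in> Spec A pl circ e" "ideal_sum A pl e \<Lambda> Is \<subseteq> P" by (auto simp: Hull_def)
        then show "P \<in> Spec A pl circ e \<inter> (\<Inter>l\<in>\<Lambda>. Hull A pl circ e (Is l))"
          using inc by (auto simp: Hull_def)
      qed
    qed
  qed
  show ?thesis
  proof (intro conjI allI impI)
    fix I J assume "brace_ideal A pl circ e I" "brace_ideal A pl circ e J"
    note h = ii[OF this]
    show "Hull A pl circ e I \<union> Hull A pl circ e J = Hull A pl circ e (I \<inter> J)" using h by (rule conjunct1)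
    show "Hull A pl circ e (I \<inter> J) = Hull A pl circ e (ideal_prod A pl circ e I J)" using h by (rule conjunct2)
  next
    fix \<Lambda> :: "'i set" and Is assume "\<forall>l\<in>\<Lambda>. brace_ideal A pl circ e (Is l)"
    then show "Spec A pl circ e \<inter> (\<Inter>l\<in>\<Lambda>. Hull A pl circ e (Is l))
           = Hull A pl circ e (ideal_sum A pl e \<Lambda> Is)" by (rule iii)
  qed (rule i1, rule i2)
qed

end
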